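(* Let $\mathcal{L}=(L,\wedge,\vee,0,1)$ be a complete lattice and let $p\in L$ with $\Omega(p)\neq\emptyset$. The following are equivalent: (a) $p$ is strongly irreducible in $L$; (a') $L\setminus[0,p]$ is closed under $\wedge$; (b) $\Omega(p)$ is closed under $\wedge$, and for every $a\in L\setminus[0,p]$ there exists $y\in\Omega(p)$ with $y\leq a$; (c) $p$ is a pseudo-complement of some element $q$ of $L$ such that $[0,q]$ is uniform; (d) for every $q\in\Omega(p)$, $p$ is a pseudo-complement of $q$ in $L$ and $[0,q]$ is uniform; (e) $p$ is irreducible and weakly $\wedge$-distributive in $L$.
   Context: An element $p$ of a lower semilattice is irreducible if for all $a,b$ with $p\leq a,b$: $a\wedge b\leq p$ implies $a\leq p$ or $b\leq p$; strongly irreducible if this holds for all $a,b$. $[a,b]=\{x\mid a\leq x\leq b\}$. For $p\in L$, $\Omega(p)=\{x\in L\setminus\{0\}\mid p\wedge x=0\}$. A lower semilattice with least element $0$ is uniform if $x\wedge y=0$ implies $x=0$ or $y=0$. A pseudo-complement of $a$ in $L$ is the greatest $x\in L$ with $a\wedge x=0$. An element $p$ is weakly $\wedge$-distributive if whenever $x\wedge y=0$ one has $p=(x\vee p)\wedge(y\vee p)$. *)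

theory Defs
  imports Main
begin

definition irreducible_el :: "'a::lattice \<Rightarrow> bool" where
  "irreducible_el p \<longleftrightarrow>
     (\<forall>a b. p \<le> a \<longrightarrow> p \<le> b \<longrightarrow> inf a b \<le> p \<longrightarrow> a \<le> p \<or> b \<le> p)"

definition strongly_irreducible :: "'a::lattice \<Rightarrow> bool" where
  "strongly_irreducible p \<longleftrightarrow> (\<forall>a b. inf a b \<le> p \<longrightarrow> a \<le> p \<or> b \<le> p)"

definition interval :: "'a::order \<Rightarrow> 'a \<Rightarrow> 'a set" where
  "interval a b = {x. a \<le> x \<and> x \<le> b}"

definition Omega :: "'a::bounded_lattice \<Rightarrow> 'a set" where
  "Omega p = {x. x \<noteq> bot \<and> inf p x = bot}"

definition meet_closed :: "'a::lattice set \<Rightarrow> bool" where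
  "meet_closed S \<longleftrightarrow> (\<forall>x\<in>S. \<forall>y\<in>S. inf x y \<in> S)"

definition uniform_on :: "'a::bounded_lattice set \<Rightarrow> bool" where
  "uniform_on S \<longleftrightarrow> (\<forall>x\<in>S. \<forall>y\<in>S. inf x y = bot \<longrightarrow> x = bot \<or> y = bot)"

definition pseudo_complement_of :: "'a::bounded_lattice \<Rightarrow> 'a \<Rightarrow> bool" where
  "pseudo_complement_of p a \<longleftrightarrow> inf a p = bot \<and> (\<forall>x. inf a x = bot \<longrightarrow> x \<le> p)"

definition weakly_meet_distributive :: "'a::bounded_lattice \<Rightarrow> bool" where
  "weakly_meet_distributive p \<longleftrightarrow>
     (\<forall>x y. inf x y = bot \<longrightarrow> p = inf (sup x p) (sup y p))"

end

theory Submission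
  imports Defs
begin

lemma key1:
  fixes a b p q :: "'a::bounded_lattice"
  assumes "inf a b \<le> p" "inf p q = bot"
  shows "inf (inf a q) (inf b q) = bot"
proof -
  have 1: "inf (inf a q) (inf b q) \<le> inf a b" by (intro inf_mono) simp_all
  have 2: "inf (inf a q) (inf b q) \<le> q" by (rule le_infI1[OF inf_le2])
  have "inf (inf a q) (inf b q) \<le> inf p q" using order.trans[OF 1 assms(1)] 2 by (rule le_infI)
  then show ?thesis using assms(2) by (simp add: bot_unique)
qed

lemma key2:
  fixes x p q :: "'a::bounded_lattice"
  assumes "inf x q \<le> p" "inf p q = bot"
  shows "inf x q = bot"
proof -
  have "inf x q \<le> inf p q" using assms(1) inf_le2 by (rule le_infI)
  then show ?thesis using assms(2) by (simp add: bot_unique)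
qed

lemma key3:
  fixes u v p :: "'a::lattice"
  assumes "irreducible_el p" "p = inf (sup u p) (sup v p)"
  shows "u \<le> p \<or> v \<le> p"
proof -
  have "inf (sup u p) (sup v p) \<le> p" using assms(2) by (simp add: eq_iff)
  moreover have "p \<le> sup u p" "p \<le> sup v p" by simp_all
  ultimately have "sup u p \<le> p \<or> sup v p \<le> p" using assms(1) unfolding irreducible_el_def by blast
  then show ?thesis by simp
qed

lemma si_a': "strongly_irreducible (p::'a::complete_lattice) \<longleftrightarrow> meet_closed (UNIV - interval bot p)"
  unfolding strongly_irreducible_def meet_closed_def interval_def by auto

lemma si_pc:
  fixes p q :: "'a::complete_lattice"
  assumes si: "strongly_irreducible p" and q: "q \<in> Omega p"
  shows "pseudo_complement_of p q \<and> uniform_on (interval bot q)"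
proof -
  have qn: "\<not> q \<le> p"
  proof
    assume "q \<le> p" then have "inf p q = q" by (simp add: inf.absorb2)
    then show False using q unfolding Omega_def by simp
  qed
  have "pseudo_complement_of p q"
    unfolding pseudo_complement_of_def
  proof (intro conjI allI impI)
    show "inf q p = bot" using q unfolding Omega_def by (simp add: inf_commute)
    fix x assume "inf q x = bot"
    then have "inf q x \<le> p" by simp
    then show "x \<le> p" using si qn unfolding strongly_irreducible_def by blast
  qed
  moreover have "uniform_on (interval bot q)"
    unfolding uniform_on_def interval_def
  proof (intro ballI impI)
    fix x y assume x: "x \<in> {x. bot \<le> x \<and> x \<le> q}" and y: "y \<in> {x. bot \<le> x \<and> x \<le> q}"
      and "inf x y = bot"
    then have "inf x y \<le> p" by simp
    then have "x \<le> p \<or> y \<le> p" using si unfolding strongly_irreducible_def by blast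
    moreover have "inf p q = bot" using q unfolding Omega_def by simp
    moreover have "x = inf x q" "y = inf y q" using x y by (simp_all add: inf.absorb1)
    ultimately show "x = bot \<or> y = bot" using key2 by metis
  qed
  ultimately show ?thesis by simp
qed

lemma c_si:
  fixes p q :: "'a::complete_lattice"
  assumes pc: "pseudo_complement_of p q" and u: "uniform_on (interval bot q)"
  shows "strongly_irreducible p"
  unfolding strongly_irreducible_def
proof (intro allI impI)
  fix a b assume ab: "inf a b \<le> p"
  have "inf p q = bot" using pc unfolding pseudo_complement_of_def by (simp add: inf_commute)
  then have "inf (inf a q) (inf b q) = bot" using ab key1 by blast
  then have "inf a q = bot \<or> inf b q = bot" using u unfolding uniform_on_def interval_def by auto
  moreover have "\<And>x. inf (x::'a) q = bot \<Longrightarrow> x \<le> p" using pc unfolding pseudo_complement_of_def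
    by (simp add: inf.commute)
  ultimately show "a \<le> p \<or> b \<le> p" by blast
qed

theorem lemma1p15:
  fixes p :: "'a::complete_lattice"
  assumes "Omega p \<noteq> {}"
  shows "(strongly_irreducible p \<longleftrightarrow> meet_closed (UNIV - interval bot p))
       \<and> (strongly_irreducible p \<longleftrightarrow>
            (meet_closed (Omega p) \<and> (\<forall>a \<in> UNIV - interval bot p. \<exists>y\<in>Omega p. y \<le> a)))
       \<and> (strongly_irreducible p \<longleftrightarrow>
            (\<exists>q. pseudo_complement_of p q \<and> uniform_on (interval bot q)))
       \<and> (strongly_irreducible p \<longleftrightarrow>
            (\<forall>q\<in>Omega p. pseudo_complement_of p q \<and> uniform_on (interval bot q)))
       \<and> (strongly_irreducible p \<longleftrightarrow> irreducible_el p \<and> weakly_meet_distributive p)"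
proof -
  obtain q where q: "q \<in> Omega p" using assms by blast
  have qb: "q \<noteq> bot" and pq: "inf p q = bot" using q unfolding Omega_def by auto
  have qn: "\<not> q \<le> p"
  proof
    assume "q \<le> p" then have "inf p q = q" by (simp add: inf.absorb2)
    then show False using qb pq by simp
  qed
  have B: "strongly_irreducible p \<longleftrightarrow>
            (meet_closed (Omega p) \<and> (\<forall>a \<in> UNIV - interval bot p. \<exists>y\<in>Omega p. y \<le> a))"
  proof
    assume si: "strongly_irreducible p"
    have "meet_closed (Omega p)"
      unfolding meet_closed_def
    proof (intro ballI)
      fix x y assume x: "x \<in> Omega p" and y: "y \<in> Omega p"
      have xn: "\<not> x \<le> p" "\<not> y \<le> p" using x y unfolding Omega_def
        by (auto simp: inf.absorb2)
      have "inf x y \<noteq> bot"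
      proof
        assume "inf x y = bot" then have "inf x y \<le> p" by simp
        then show False using si xn unfolding strongly_irreducible_def by blast
      qed
      moreover have "inf p (inf x y) = bot"
      proof -
        have "inf p x = bot" using x unfolding Omega_def by simp
        moreover have "inf p (inf x y) \<le> inf p x" by (simp add: le_infI2)
        ultimately show ?thesis by (simp add: bot_unique)
      qed
      ultimately show "inf x y \<in> Omega p" unfolding Omega_def by simp
    qed
    moreover have "\<forall>a \<in> UNIV - interval bot p. \<exists>y\<in>Omega p. y \<le> a"
    proof
      fix a assume "a \<in> UNIV - interval bot p"
      then have an: "\<not> a \<le> p" unfolding interval_def by simp
      have n: "\<not> inf a q \<le> p" using si an qn unfolding strongly_irreducible_def by blast
      then have "inf a q \<noteq> bot" by auto
      moreover have "inf p (inf a q) = bot"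
      proof -
        have "inf p (inf a q) \<le> inf p q" by (simp add: le_infI2)
        then show ?thesis using pq by (simp add: bot_unique)
      qed
      ultimately show "\<exists>y\<in>Omega p. y \<le> a" unfolding Omega_def
        by (intro bexI[of _ "inf a q"]) auto
    qed
    ultimately show "meet_closed (Omega p) \<and> (\<forall>a \<in> UNIV - interval bot p. \<exists>y\<in>Omega p. y \<le> a)" ..
  next
    assume h: "meet_closed (Omega p) \<and> (\<forall>a \<in> UNIV - interval bot p. \<exists>y\<in>Omega p. y \<le> a)"
    show "strongly_irreducible p"
      unfolding strongly_irreducible_def
    proof (intro allI impI, rule ccontr)
      fix a b assume ab: "inf a b \<le> p" and nn: "\<not> (a \<le> p \<or> b \<le> p)"
      obtain y where y: "y \<in> Omega p" "y \<le> a" using h nn unfolding interval_def by auto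
      obtain z where z: "z \<in> Omega p" "z \<le> b" using h nn unfolding interval_def by auto
      have yz: "inf y z \<in> Omega p" using h y z unfolding meet_closed_def by blast
      have "inf y z \<le> p" using ab y z by (meson inf_mono order.trans)
      then have "inf p (inf y z) = inf y z" by (simp add: inf.absorb2)
      then show False using yz unfolding Omega_def by simp
    qed
  qed
  have D: "strongly_irreducible p \<longleftrightarrow>
            (\<forall>q\<in>Omega p. pseudo_complement_of p q \<and> uniform_on (interval bot q))"
    using si_pc c_si q by blast
  have C: "strongly_irreducible p \<longleftrightarrow>
            (\<exists>q. pseudo_complement_of p q \<and> uniform_on (interval bot q))"
    using si_pc c_si q by blast
  have E: "strongly_irreducible p \<longleftrightarrow> irreducible_el p \<and> weakly_meet_distributive p"
  proof
    assume si: "strongly_irreducible p"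
    have "irreducible_el p" using si unfolding strongly_irreducible_def irreducible_el_def by blast
    moreover have "weakly_meet_distributive p"
      unfolding weakly_meet_distributive_def
    proof (intro allI impI)
      fix x y :: 'a assume "inf x y = bot"
      then have "x \<le> p \<or> y \<le> p" using si unfolding strongly_irreducible_def by simp
      then show "p = inf (sup x p) (sup y p)"
      proof
        assume "x \<le> p" then have "sup x p = p" by (simp add: sup.absorb2)
        then show ?thesis by (simp add: inf.absorb1)
      next
        assume "y \<le> p" then have "sup y p = p" by (simp add: sup.absorb2)
        then show ?thesis by (simp add: inf.absorb2)
      qed
    qed
    ultimately show "irreducible_el p \<and> weakly_meet_distributive p" ..
  next
    assume h: "irreducible_el p \<and> weakly_meet_distributive p"
    have pc: "pseudo_complement_of p q"
      unfolding pseudo_complement_of_def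
    proof (intro conjI allI impI)
      show "inf q p = bot" using pq by (simp add: inf_commute)
      fix x assume "inf q x = bot"
      then have e: "p = inf (sup q p) (sup x p)" using h unfolding weakly_meet_distributive_def by blast
      have "q \<le> p \<or> x \<le> p" using h e key3 by blast
      then show "x \<le> p" using qn by simp
    qed
    show "strongly_irreducible p"
      unfolding strongly_irreducible_def
    proof (intro allI impI)
      fix a b assume ab: "inf a b \<le> p"
      have z: "inf (inf a q) (inf b q) = bot" using ab pq key1 by blast
      then have e: "p = inf (sup (inf a q) p) (sup (inf b q) p)"
        using h unfolding weakly_meet_distributive_def by blast
      have "inf a q \<le> p \<or> inf b q \<le> p" using h e key3 by blast
      then have "inf a q = bot \<or> inf b q = bot" using pq key2 by blast
      moreover have "\<And>x. inf (x::'a) q = bot \<Longrightarrow> x \<le> p" using pc unfolding pseudo_complement_of_def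
        by (simp add: inf.commute)
      ultimately show "a \<le> p \<or> b \<le> p" by blast
    qed
  qed
  show ?thesis using si_a' B C D E by blast
qed

end
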